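(* Let $N\ge1$ and consider the annulus modelled as the strip $\mathbb R\times[0,1]$ modulo the translation $x\mapsto x+N$, with marked points $A_j=(j-1,0)$ on the bottom boundary and $B_j=(j-1,1)$ on the top boundary ($j\in\mathbb Z$, indices mod $N$). Let $\tau_N$ be the ideal triangulation whose interior edges are the vertical edges $A_jB_j$, labelled $2j-1$, and the diagonal edges $B_jA_{j+1}$, labelled $2j$ (labels taken mod $2N$), and let $f_1,\dots,f_{2N}>0$ be the Fock coordinates on the Teichmüller space of the annulus associated with $\tau_N$. Let $D^{1/N}$ be the mapping class which fixes each $A_j$ and maps $B_j\mapsto B_{j+1}$ (so that its $N$-th power is the Dehn twist fixing the boundary pointwise). Then $D^{1/N}$ acts on the Fock coordinates by \[ f'_{2j}=1/f_{2j-1},\qquad f'_{2j+1}=f_{2j}(1+f_{2j-1})(1+f_{2j+1}),\qquad j\in\mathbb Z \ (\text{indices mod }2N). \] Equivalently: if one sets $f_m=\chi_{m,0}$ for odd $m$ and $f_m=1/\chi_{m,-1}$ for even $m$, where $(\chi_{m,n})_{m+n\equiv1\ (2)}$ is a positive solution of the discrete Liouville equation $\chi_{m,n-1}\chi_{m,n+1}=(1+\chi_{m-1,n})(1+\chi_{m+1,n})$ on the sublattice $m+n\equiv 1\pmod 2$ with $\chi_{m+2N,n}=\chi_{m,n}$, then the transformed coordinates $f'_m$ correspond in the same way to the shifted solution $\chi'_{m,n}=\chi_{m-1,n+1}$. Thus the dynamical system defined by $D^{1/N}$ is the $2N$-periodic discrete Liouville equation with evolution step the light-cone translation $\chi_{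m,n}\mapsto\chi_{m-1,n+1}$.
   Context: Fock coordinates: positive real numbers attached to the interior edges of an ideal triangulation (no coordinates on boundary arcs). Under a flip of the diagonal $e$ of a quadrilateral with sides $a,b$ (top-left, top-right) and $c,d$ (bottom-left, bottom-right), the coordinates transform as $a'=a/(1+1/e)$, $d'=d/(1+1/e)$, $b'=b(1+e)$, $c'=c(1+e)$, $e'=1/e$, all others unchanged; for sides lying on the boundary there is nothing to transform. *)

theory Defs
  imports Complex_Main
begin

text \<open>A point is given by a developing map of the lifted marked points
into the real projective line (normalised so that the two fixed points of the hyperbolic
holonomy of the core curve are 0 and infinity, holonomy x \<mapsto> lam * x):
  A_j \<mapsto> a j (positive, increasing in j),  B_j \<mapsto> b j (negative, decreasing in j),
equivariant under the deck translation j \<mapsto> j + N.  (Points differing by a positive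
scaling represent the same hyperbolic structure; Fock coordinates are invariant.)
The increasing order on the real line is the positive (counterclockwise) boundary order.\<close>

definition teich_point :: "nat \<Rightarrow> real \<Rightarrow> (int \<Rightarrow> real) \<Rightarrow> (int \<Rightarrow> real) \<Rightarrow> bool" where
  "teich_point N lam a b \<longleftrightarrow> lam > 1 \<and>
     (\<forall>j. 0 < a j \<and> a j < a (j + 1) \<and> b j < 0 \<and> b (j + 1) < b j \<and>
          a (j + int N) = lam * a j \<and> b (j + int N) = lam * b j)"

text \<open>Fock (shear) coordinate of the diagonal x1 x3 of the ideal quadrilateral with
vertices x1, x2, x3, x4 in counterclockwise order.  With this convention the flip of
the diagonal e transforms coordinates as in the flip rule (diagonal drawn vertically:
the sides x2x3 (top-right) and x4x1 (bottom-left) get multiplied by 1+e, the other two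
divided by 1+1/e, and e becomes 1/e).\<close>

definition fock_cr :: "real \<Rightarrow> real \<Rightarrow> real \<Rightarrow> real \<Rightarrow> real" where
  "fock_cr x1 x2 x3 x4 = ((x3 - x2) * (x4 - x1)) / ((x2 - x1) * (x4 - x3))"

text \<open>Fock coordinates with respect to the triangulation tau_N:
edge 2j-1 = A_j B_j (quadrilateral A_j, A_(j+1), B_j, B_(j-1)),
edge 2j   = B_j A_(j+1) (quadrilateral B_j, A_j, A_(j+1), B_(j+1)).
Labels are integers; the result is automatically 2N-periodic.\<close>

definition fock :: "(int \<Rightarrow> real) \<Rightarrow> (int \<Rightarrow> real) \<Rightarrow> int \<Rightarrow> real" where
  "fock a b m =
     (if odd m then (let j = (m + 1) div 2 in fock_cr (a j) (a (j + 1)) (b j) (b (j - 1)))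
      else (let j = m div 2 in fock_cr (b j) (a j) (a (j + 1)) (b (j + 1))))"

text \<open>Push-forward of a Teichmueller point by D^(1/N), which fixes every A_j and sends
B_j to B_(j+1): the new developing map sends B_(j+1) to the old image of B_j.
The A-part and the holonomy are unchanged.\<close>

definition Dfrac_B :: "(int \<Rightarrow> real) \<Rightarrow> (int \<Rightarrow> real)" where
  "Dfrac_B b = (\<lambda>j. b (j - 1))"

definition liouville_sol :: "nat \<Rightarrow> (int \<Rightarrow> int \<Rightarrow> real) \<Rightarrow> bool" where
  "liouville_sol N chi \<longleftrightarrow>
     (\<forall>m n. odd (m + n) \<longrightarrow> chi m n > 0) \<and>
     (\<forall>m n. even (m + n) \<longrightarrow>
        chi m (n - 1) * chi m (n + 1) = (1 + chi (m - 1) n) * (1 + chi (m + 1) n)) \<and>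
     (\<forall>m n. odd (m + n) \<longrightarrow> chi (m + 2 * int N) n = chi m n)"

definition chi_to_fock :: "(int \<Rightarrow> int \<Rightarrow> real) \<Rightarrow> int \<Rightarrow> real" where
  "chi_to_fock chi m = (if odd m then chi m 0 else 1 / chi m (-1))"

end

theory Submission
  imports Defs
begin

lemma one_plus_frac: "(y::real) \<noteq> 0 \<Longrightarrow> y + x = z \<Longrightarrow> 1 + x / y = z / y"
  by (simp add: field_simps)

lemma key2:
  fixes a0 a1 a2 bm b0 b1 :: real
  assumes "a0 < a1" "a1 < a2" "b1 < b0" "b0 < bm" "0 < a0" "bm < 0"
  shows "fock_cr a1 a2 b0 bm = fock_cr b0 a0 a1 b1 * (1 + fock_cr a0 a1 b0 bm) * (1 + fock_cr a1 a2 b1 b0)"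
proof -
  have d1: "(a1 - a0) * (bm - b0) \<noteq> 0" using assms by simp
  have d2: "(a2 - a1) * (b0 - b1) \<noteq> 0" using assms by simp
  have d3: "(a0 - b0) * (b1 - a1) \<noteq> 0" using assms by simp
  have d4: "(a2 - a1) * (bm - b0) \<noteq> 0" using assms by simp
  have e1: "1 + fock_cr a0 a1 b0 bm = ((b0-a0)*(bm-a1))/((a1-a0)*(bm-b0))"
    unfolding fock_cr_def by (rule one_plus_frac[OF d1]) algebra
  have e2: "1 + fock_cr a1 a2 b1 b0 = ((b1-a1)*(b0-a2))/((a2-a1)*(b0-b1))"
    unfolding fock_cr_def by (rule one_plus_frac[OF d2]) algebra
  have e3: "fock_cr b0 a0 a1 b1 = ((a1-a0)*(b1-b0))/((a0-b0)*(b1-a1))"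
    unfolding fock_cr_def by simp
  have e4: "fock_cr a1 a2 b0 bm = ((b0 - a2) * (bm - a1)) / ((a2 - a1) * (bm - b0))"
    unfolding fock_cr_def by simp
  have dd: "(a0 - b0) * (b1 - a1) * ((a1 - a0) * (bm - b0)) * ((a2 - a1) * (b0 - b1)) \<noteq> 0"
    using d1 d2 d3 by simp
  show ?thesis unfolding e1 e2 e3 e4 times_divide_eq_left times_divide_eq_right divide_divide_eq_left
    apply (subst frac_eq_eq[OF d4 dd])
    apply (simp add: algebra_simps)
    done
qed

theorem mainTheorem2:
  fixes N :: nat and lam :: real and a b :: "int \<Rightarrow> real"
  assumes "N \<ge> 1"
    and "teich_point N lam a b"
  shows "(\<forall>j::int. fock a (Dfrac_B b) (2 * j) = 1 / fock a b (2 * j - 1) \<and>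
            fock a (Dfrac_B b) (2 * j + 1) =
              fock a b (2 * j) * (1 + fock a b (2 * j - 1)) * (1 + fock a b (2 * j + 1)))
       \<and> (\<forall>chi. liouville_sol N chi \<and> (\<forall>m. fock a b m = chi_to_fock chi m) \<longrightarrow>
            (\<forall>m. fock a (Dfrac_B b) m = chi_to_fock (\<lambda>m n. chi (m - 1) (n + 1)) m))"
proof -
  have T: "\<And>j. 0 < a j \<and> a j < a (j + 1) \<and> b j < 0 \<and> b (j + 1) < b j"
    using assms(2) unfolding teich_point_def by blast
  have A: "\<And>j. fock a (Dfrac_B b) (2 * j) = 1 / fock a b (2 * j - 1)"
  proof -
    fix j :: int
    have e1: "(2 * j - 1 + 1) div 2 = j" by simp
    have "fock a (Dfrac_B b) (2 * j) = fock_cr (b (j - 1)) (a j) (a (j+1)) (b j)"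
      by (simp add: fock_def Dfrac_B_def)
    moreover have "fock a b (2 * j - 1) = fock_cr (a j) (a (j+1)) (b j) (b (j - 1))"
      by (simp add: fock_def)
    moreover have "fock_cr (b (j - 1)) (a j) (a (j+1)) (b j) = 1 / fock_cr (a j) (a (j+1)) (b j) (b (j - 1))"
    proof -
      have n: "(a (j + 1) - a j) * (b j - b (j - 1)) \<noteq> 0" "(b j - a (j+1)) * (b (j - 1) - a j) \<noteq> 0"
        using T[of j] T[of "j-1"] by auto
      show ?thesis unfolding fock_cr_def using n
        by (simp add: divide_simps) (simp add: algebra_simps)
    qed
    ultimately show "fock a (Dfrac_B b) (2 * j) = 1 / fock a b (2 * j - 1)" by simp
  qed
  have B: "\<And>j. fock a (Dfrac_B b) (2 * j + 1) =
              fock a b (2 * j) * (1 + fock a b (2 * j - 1)) * (1 + fock a b (2 * j + 1))"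
  proof -
    fix j :: int
    have "fock a (Dfrac_B b) (2 * j + 1) = fock_cr (a (j+1)) (a (j+2)) (b j) (b (j - 1))"
      by (simp add: fock_def Dfrac_B_def add.assoc)
    moreover have "fock a b (2 * j - 1) = fock_cr (a j) (a (j+1)) (b j) (b (j - 1))"
      by (simp add: fock_def)
    moreover have "fock a b (2 * j) = fock_cr (b j) (a j) (a (j+1)) (b (j + 1))"
      by (simp add: fock_def)
    moreover have "fock a b (2 * j + 1) = fock_cr (a (j+1)) (a (j+2)) (b (j+1)) (b j)"
      by (simp add: fock_def add.assoc Let_def)
    moreover have "fock_cr (a (j+1)) (a (j+2)) (b j) (b (j - 1)) =
       fock_cr (b j) (a j) (a (j+1)) (b (j + 1)) * (1 + fock_cr (a j) (a (j+1)) (b j) (b (j - 1)))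
       * (1 + fock_cr (a (j+1)) (a (j+2)) (b (j+1)) (b j))"
      using key2[of "a j" "a (j+1)" "a (j+2)" "b (j+1)" "b j" "b (j - 1)"]
        T[of j] T[of "j-1"] T[of "j+1"] by (simp add: add.assoc)
    ultimately show "fock a (Dfrac_B b) (2 * j + 1) =
              fock a b (2 * j) * (1 + fock a b (2 * j - 1)) * (1 + fock a b (2 * j + 1))" by simp
  qed
  have C: "\<forall>m. fock a (Dfrac_B b) m = chi_to_fock (\<lambda>m n. chi (m - 1) (n + 1)) m"
    if L: "liouville_sol N chi" and E: "\<forall>m. fock a b m = chi_to_fock chi m" for chi
  proof
    fix m :: int
    have pos: "\<And>m n. odd (m + n) \<Longrightarrow> chi m n > 0"
      and eq: "\<And>m n. even (m + n) \<Longrightarrow> chi m (n - 1) * chi m (n + 1) = (1 + chi (m - 1) n) * (1 + chi (m + 1) n)"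
      using L unfolding liouville_sol_def by auto
    show "fock a (Dfrac_B b) m = chi_to_fock (\<lambda>m n. chi (m - 1) (n + 1)) m"
    proof (cases "even m")
      case True
      then obtain j where j: "m = 2 * j" by (auto elim: evenE)
      have "fock a b (2*j - 1) = chi (2*j-1) 0" using E by (simp add: chi_to_fock_def)
      then show ?thesis using A[of j] j by (simp add: chi_to_fock_def)
    next
      case False
      then obtain j where j: "m = 2 * j + 1" by (auto elim: oddE)
      have f1: "fock a b (2*j - 1) = chi (2*j-1) 0" using E by (simp add: chi_to_fock_def)
      have f2: "fock a b (2*j + 1) = chi (2*j+1) 0" using E by (simp add: chi_to_fock_def)
      have f0: "fock a b (2*j) = 1 / chi (2*j) (-1)" using E by (simp add: chi_to_fock_def)
      have p: "chi (2*j) (-1) > 0" using pos[of "2*j" "-1"] by simp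
      have q: "chi (2*j) (0 - 1) * chi (2*j) (0 + 1) = (1 + chi (2*j - 1) 0) * (1 + chi (2*j + 1) 0)"
        using eq[of "2*j" 0] by simp
      have r: "chi (2*j) 1 = (1 + chi (2*j - 1) 0) * (1 + chi (2*j + 1) 0) / chi (2*j) (-1)"
        using q p by (simp add: field_simps)
      show ?thesis using B[of j] j f0 f1 f2 r by (simp add: chi_to_fock_def)
    qed
  qed
  show ?thesis using A B C by blast
qed

end
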